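(* Let $s\in S$. The composition of the inclusion $\mathrm{Der}^S_s\overline A_{H,S}\hookrightarrow\mathrm{Der}^{SS}\overline A_{H,S}$ with the projection $\mathrm{Der}^{SS}\overline A_{H,S}\to\mathrm{ODer}^{SS}\overline A_{H,S}$ is surjective, and its kernel is spanned by the inner derivations $[X_s^n,\,\cdot\,]$, $n\ge0$.
   Context: Let $H$ be a finite-dimensional symplectic $\mathbb Q$-vector space with symplectic basis $\{p_i,q_i\}$ and $S$ a non-empty finite set. $A_{H,S}$ is the free associative algebra on $H\oplus\mathbb Q[S]$ (generators $p_i,q_i$, and $X_t$ for $t\in S$), and $\overline A_{H,S}$ is its quotient by the two-sided ideal generated by $\sum_i[p_i,q_i]+\sum_{t\in S}X_t$ (so $\overline A_{H,S}$ is free on $p_i,q_i$, $X_t$, $t\neq s$). A derivation $\mathcal D$ of $\overline A_{H,S}$ is semi-special if for every $t\in S$ there is $B_t\in\overline A_{H,S}$ with $\mathcal D(X_t)=[B_t,X_t]$; they form a Lie algebra $\mathrm{Der}^{SS}\overline A_{H,S}$ containing all inner derivations $[B,\cdot\,]$. $\mathrm{ODer}^{SS}\overline A_{H,S}$ is the quotient of $\mathrm{Der}^{SS}\overline A_{H,S}$ by the inner derivations. $\mathrm{Der}^S_s\overline A_{H,S}\subset\mathrm{Der}^{SS}\overline A_{H,S}$ is the Lie subalgebra of semi-special derivations killing $X_s$. *)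

theory Defs
  imports Complex_Main
begin

text \<open>Generators of the free associative algebra A_{H,S}: p_i, q_i (i ranging over the
index set of a symplectic basis of H) and X_t (t in S).\<close>
datatype ('i, 't) gen = P 'i | Q 'i | X 't

text \<open>Elements of the free associative Q-algebra: finitely supported functions from words
in the generators to the rationals (noncommutative polynomials).\<close>
type_synonym ('i, 't) fa = "('i, 't) gen list \<Rightarrow> rat"

definition gens :: "'i set \<Rightarrow> 't set \<Rightarrow> ('i, 't) gen set" where
  "gens I S = P ` I \<union> Q ` I \<union> X ` S"

definition alg :: "'i set \<Rightarrow> 't set \<Rightarrow> ('i, 't) fa set" where
  "alg I S = {f. finite {w. f w \<noteq> 0} \<and> (\<forall>w. f w \<noteq> 0 \<longrightarrow> set w \<subseteq> gens I S)}"

definition fa_zero :: "('i, 't) fa" where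
  "fa_zero = (\<lambda>w. 0)"

definition fa_one :: "('i, 't) fa" where
  "fa_one = (\<lambda>w. if w = [] then 1 else 0)"

definition fa_gen :: "('i, 't) gen \<Rightarrow> ('i, 't) fa" where
  "fa_gen g = (\<lambda>w. if w = [g] then 1 else 0)"

definition fa_add :: "('i, 't) fa \<Rightarrow> ('i, 't) fa \<Rightarrow> ('i, 't) fa" where
  "fa_add f g = (\<lambda>w. f w + g w)"

definition fa_smult :: "rat \<Rightarrow> ('i, 't) fa \<Rightarrow> ('i, 't) fa" where
  "fa_smult c f = (\<lambda>w. c * f w)"

definition fa_diff :: "('i, 't) fa \<Rightarrow> ('i, 't) fa \<Rightarrow> ('i, 't) fa" where
  "fa_diff f g = (\<lambda>w. f w - g w)"

definition fa_mult :: "('i, 't) fa \<Rightarrow> ('i, 't) fa \<Rightarrow> ('i, 't) fa" where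
  "fa_mult f g = (\<lambda>w. \<Sum>k\<le>length w. f (take k w) * g (drop k w))"

definition fa_comm :: "('i, 't) fa \<Rightarrow> ('i, 't) fa \<Rightarrow> ('i, 't) fa" where
  "fa_comm a b = fa_diff (fa_mult a b) (fa_mult b a)"

definition fa_pow :: "('i, 't) fa \<Rightarrow> nat \<Rightarrow> ('i, 't) fa" where
  "fa_pow a n = ((fa_mult a) ^^ n) fa_one"

definition relator :: "'i set \<Rightarrow> 't set \<Rightarrow> ('i, 't) fa" where
  "relator I S = (\<lambda>w. (\<Sum>i\<in>I. fa_comm (fa_gen (P i)) (fa_gen (Q i)) w)
                      + (\<Sum>t\<in>S. fa_gen (X t) w))"

inductive_set rel_ideal :: "'i set \<Rightarrow> 't set \<Rightarrow> ('i, 't) fa set" for I S where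
  zero: "fa_zero \<in> rel_ideal I S"
| step: "a \<in> alg I S \<Longrightarrow> b \<in> alg I S \<Longrightarrow> x \<in> rel_ideal I S \<Longrightarrow>
         fa_add (fa_mult (fa_mult a (relator I S)) b) x \<in> rel_ideal I S"

text \<open>Congruence modulo the ideal: equality in the quotient Abar_{H,S}.\<close>
definition qeq :: "'i set \<Rightarrow> 't set \<Rightarrow> ('i, 't) fa \<Rightarrow> ('i, 't) fa \<Rightarrow> bool" where
  "qeq I S x y \<longleftrightarrow> fa_diff x y \<in> rel_ideal I S"

text \<open>A derivation of Abar_{H,S}, represented by a map on representatives in A_{H,S}
that respects the congruence and is Q-linear and Leibniz modulo the ideal.\<close>
definition is_der :: "'i set \<Rightarrow> 't set \<Rightarrow> (('i, 't) fa \<Rightarrow> ('i, 't) fa) \<Rightarrow> bool" where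
  "is_der I S D \<longleftrightarrow>
     (\<forall>x\<in>alg I S. D x \<in> alg I S) \<and>
     (\<forall>x\<in>alg I S. \<forall>y\<in>alg I S. qeq I S x y \<longrightarrow> qeq I S (D x) (D y)) \<and>
     (\<forall>x\<in>alg I S. \<forall>y\<in>alg I S. qeq I S (D (fa_add x y)) (fa_add (D x) (D y))) \<and>
     (\<forall>x\<in>alg I S. \<forall>c. qeq I S (D (fa_smult c x)) (fa_smult c (D x))) \<and>
     (\<forall>x\<in>alg I S. \<forall>y\<in>alg I S.
        qeq I S (D (fa_mult x y)) (fa_add (fa_mult (D x) y) (fa_mult x (D y))))"

definition is_semispecial :: "'i set \<Rightarrow> 't set \<Rightarrow> (('i, 't) fa \<Rightarrow> ('i, 't) fa) \<Rightarrow> bool" where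
  "is_semispecial I S D \<longleftrightarrow> is_der I S D \<and>
     (\<forall>t\<in>S. \<exists>B\<in>alg I S. qeq I S (D (fa_gen (X t))) (fa_comm B (fa_gen (X t))))"

definition is_der_s :: "'i set \<Rightarrow> 't set \<Rightarrow> 't \<Rightarrow> (('i, 't) fa \<Rightarrow> ('i, 't) fa) \<Rightarrow> bool" where
  "is_der_s I S s D \<longleftrightarrow> is_semispecial I S D \<and> qeq I S (D (fa_gen (X s))) fa_zero"

definition is_inner :: "'i set \<Rightarrow> 't set \<Rightarrow> (('i, 't) fa \<Rightarrow> ('i, 't) fa) \<Rightarrow> bool" where
  "is_inner I S D \<longleftrightarrow> (\<exists>B\<in>alg I S. \<forall>x\<in>alg I S. qeq I S (D x) (fa_comm B x))"

end

theory Submission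
  imports Defs "HOL-Library.Poly_Mapping"
begin

instantiation list :: (type) monoid_add
begin
definition zero_list :: "'a list" where "zero_list = []"
definition plus_list :: "'a list \<Rightarrow> 'a list \<Rightarrow> 'a list" where "plus_list a b = a @ b"
instance by standard (auto simp: zero_list_def plus_list_def)
end

abbreviation lk where "lk \<equiv> Poly_Mapping.lookup"
abbreviation ks where "ks \<equiv> Poly_Mapping.keys"
abbreviation sg where "sg \<equiv> Poly_Mapping.single"

type_synonym ('i,'t) pm = "('i,'t) gen list \<Rightarrow>\<^sub>0 rat"

lemma lookup_mult_list:
  fixes p q :: "'a list \<Rightarrow>\<^sub>0 rat"
  shows "lk (p * q) w = (\<Sum>k\<le>length w. lk p (take k w) * lk q (drop k w))"
proof -
  let ?h = "\<lambda>(a, b). lk p a * lk q b when w = a + b"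
  let ?T = "(\<lambda>k. (take k w, drop k w)) ` {..length w}"
  have "lk (p * q) w = prod_fun (lk p) (lk q) w"
    by (simp add: lookup_mult prod_fun_def)
  also have "\<dots> = Sum_any ?h"
    by (rule prod_fun_unfold_prod) auto
  also have "\<dots> = sum ?h ?T"
  proof (rule Sum_any.expand_superset)
    show "finite ?T" by simp
    show "{a. ?h a \<noteq> 0} \<subseteq> ?T"
    proof
      fix x assume "x \<in> {a. ?h a \<noteq> 0}"
      then obtain a b where x: "x = (a,b)" "w = a @ b" by (cases x) (auto simp: plus_list_def)
      then show "x \<in> ?T" by (auto intro!: image_eqI[where x="length a"])
    qed
  qed
  also have "\<dots> = (\<Sum>k\<le>length w. ?h (take k w, drop k w))"
    by (rule sum.reindex_cong[where l="\<lambda>k. (take k w, drop k w)"])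
       (auto simp: inj_on_def intro: append_take_drop_id, metis length_take min.absorb2)
  also have "\<dots> = (\<Sum>k\<le>length w. lk p (take k w) * lk q (drop k w))"
    by (simp add: plus_list_def)
  finally show ?thesis .
qed

lemma fa_mult_lookup: fixes p q :: "('i,'t) pm" shows "fa_mult (lk p) (lk q) = lk (p * q)"
  by (simp add: fa_mult_def lookup_mult_list fun_eq_iff)
lemma fa_add_lookup: fixes p q :: "('i,'t) pm" shows "fa_add (lk p) (lk q) = lk (p + q)"
  by (simp add: fa_add_def lookup_add fun_eq_iff)
lemma fa_diff_lookup: fixes p q :: "('i,'t) pm" shows "fa_diff (lk p) (lk q) = lk (p - q)"
  by (simp add: fa_diff_def lookup_minus fun_eq_iff)
lemma fa_comm_lookup: fixes p q :: "('i,'t) pm" shows "fa_comm (lk p) (lk q) = lk (p * q - q * p)"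
  by (simp add: fa_comm_def fa_mult_lookup fa_diff_lookup)
lemma fa_zero_lookup: "fa_zero = lk 0"
  by (simp add: fa_zero_def fun_eq_iff)
lemma fa_one_lookup: "fa_one = lk 1"
  by (simp add: fa_one_def fun_eq_iff lookup_one zero_list_def when_def)
lemma fa_gen_lookup: "fa_gen g = lk (sg [g] 1)"
  by (simp add: fa_gen_def fun_eq_iff lookup_single when_def)
lemma fa_pow_lookup: fixes p :: "('i,'t) pm" shows "fa_pow (lk p) n = lk (p ^ n)"
  by (induct n) (simp_all add: fa_pow_def fa_one_lookup fa_mult_lookup)

definition sc :: "rat \<Rightarrow> ('a list \<Rightarrow>\<^sub>0 rat)" where "sc c = sg [] c"

lemma lookup_sc_mult: "lk (sc c * p) w = c * lk p w"
proof -
  have "lk (sc c * p) w = (\<Sum>k\<le>length w. (if k = 0 then c * lk p w else 0))"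
    unfolding lookup_mult_list
    by (rule sum.cong) (auto simp: sc_def lookup_single when_def)
  then show ?thesis by simp
qed

lemma lookup_mult_sc: "lk (p * sc c) w = lk p w * c"
proof -
  have "lk (p * sc c) w = (\<Sum>k\<le>length w. (if k = length w then lk p w * c else 0))"
    unfolding lookup_mult_list
    by (rule sum.cong) (auto simp: sc_def lookup_single when_def)
  then show ?thesis by simp
qed

lemma sc_comm: "sc c * p = p * sc c"
  by (rule poly_mapping_eqI) (simp add: lookup_sc_mult lookup_mult_sc)


definition Apm :: "'a set \<Rightarrow> ('a list \<Rightarrow>\<^sub>0 rat) set" where
  "Apm G = {p. \<forall>w\<in>ks p. set w \<subseteq> G}"

lemma Apm_zero[simp]: "0 \<in> Apm G" by (simp add: Apm_def)
lemma Apm_one[simp]: "1 \<in> Apm G" by (simp add: Apm_def zero_list_def)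
lemma Apm_sc[simp]: "sc c \<in> Apm G" by (simp add: Apm_def sc_def)
lemma Apm_gen: "g \<in> G \<Longrightarrow> sg [g] c \<in> Apm G" by (simp add: Apm_def)
lemma Apm_add[simp]: "p \<in> Apm G \<Longrightarrow> q \<in> Apm G \<Longrightarrow> p + q \<in> Apm G"
  using keys_add[of p q] by (auto simp: Apm_def)
lemma Apm_uminus[simp]: "p \<in> Apm G \<Longrightarrow> - p \<in> Apm G"
  by (auto simp: Apm_def)
lemma Apm_diff[simp]: "p \<in> Apm G \<Longrightarrow> q \<in> Apm G \<Longrightarrow> p - q \<in> Apm G"
  using Apm_add[of p G "-q"] by simp
lemma Apm_mult[simp]: "p \<in> Apm G \<Longrightarrow> q \<in> Apm G \<Longrightarrow> p * q \<in> Apm G"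
  using keys_mult[of p q] by (fastforce simp: Apm_def plus_list_def)
lemma Apm_sum[simp]: "(\<And>i. i \<in> K \<Longrightarrow> f i \<in> Apm G) \<Longrightarrow> sum f K \<in> Apm G"
  by (induct K rule: infinite_finite_induct) auto
lemma Apm_power[simp]: "p \<in> Apm G \<Longrightarrow> p ^ n \<in> Apm G"
  by (induct n) auto

lemma alg_eq: "alg I S = lk ` Apm (gens I S)"
proof (intro equalityI subsetI)
  fix x assume x: "x \<in> alg I S"
  then have fin: "finite {w. x w \<noteq> 0}" by (simp add: alg_def)
  let ?p = "Abs_poly_mapping x"
  have "lk ?p = x" using fin by simp
  moreover have "?p \<in> Apm (gens I S)"
    using x fin by (auto simp: Apm_def alg_def in_keys_iff)
  ultimately show "x \<in> lk ` Apm (gens I S)" by force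
next
  fix x assume "x \<in> lk ` Apm (gens I S)"
  then obtain p where "x = lk p" "p \<in> Apm (gens I S)" by auto
  then show "x \<in> alg I S" by (auto simp: alg_def Apm_def in_keys_iff)
qed

lemma alg_lk: "x \<in> alg I S \<Longrightarrow> \<exists>p\<in>Apm (gens I S). x = lk p"
  by (auto simp: alg_eq)
lemma lk_alg: "p \<in> Apm (gens I S) \<Longrightarrow> lk p \<in> alg I S"
  by (auto simp: alg_eq)

definition Rpm :: "'i set \<Rightarrow> 't set \<Rightarrow> ('i,'t) pm" where
  "Rpm I S = (\<Sum>i\<in>I. sg [P i] 1 * sg [Q i] 1 - sg [Q i] 1 * sg [P i] 1) + (\<Sum>t\<in>S. sg [X t] 1)"

lemma relator_lk: "relator I S = lk (Rpm I S)"
  by (simp add: relator_def Rpm_def fun_eq_iff lookup_add lookup_sum fa_comm_lookup fa_gen_lookup)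

lemma Rpm_Apm: "Rpm I S \<in> Apm (gens I S)"
  unfolding Rpm_def by (auto intro!: Apm_sum Apm_add Apm_diff Apm_mult Apm_gen simp: gens_def)

inductive_set Jset :: "'a set \<Rightarrow> ('a list \<Rightarrow>\<^sub>0 rat) \<Rightarrow> ('a list \<Rightarrow>\<^sub>0 rat) set" for G R where
  zero: "0 \<in> Jset G R"
| step: "a \<in> Apm G \<Longrightarrow> b \<in> Apm G \<Longrightarrow> x \<in> Jset G R \<Longrightarrow> a * R * b + x \<in> Jset G R"

lemma rel_ideal_eq: "rel_ideal I S = lk ` Jset (gens I S) (Rpm I S)"
proof (intro equalityI subsetI)
  fix x assume "x \<in> rel_ideal I S"
  then show "x \<in> lk ` Jset (gens I S) (Rpm I S)"
  proof induct
    case zero then show ?case by (rule image_eqI[where x=0]) (auto simp: fa_zero_def fun_eq_iff intro: Jset.zero)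
  next
    case (step a b x)
    then obtain a' b' x' where "a' \<in> Apm (gens I S)" "b' \<in> Apm (gens I S)" "x' \<in> Jset (gens I S) (Rpm I S)"
      "a = lk a'" "b = lk b'" "x = lk x'" by (auto simp: alg_eq)
    then show ?case
      by (auto simp: relator_lk fa_mult_lookup fa_add_lookup intro!: image_eqI Jset.step)
  qed
next
  fix x assume "x \<in> lk ` Jset (gens I S) (Rpm I S)"
  then obtain p where p: "p \<in> Jset (gens I S) (Rpm I S)" "x = lk p" by auto
  from p(1) have "lk p \<in> rel_ideal I S"
  proof induct
    case zero then show ?case using rel_ideal.zero[of I S] by (simp add: fa_zero_def fun_eq_iff)
  next
    case (step a b x)
    then have "fa_add (fa_mult (fa_mult (lk a) (relator I S)) (lk b)) (lk x) \<in> rel_ideal I S"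
      by (intro rel_ideal.step lk_alg)
    then show ?case by (simp add: relator_lk fa_mult_lookup fa_add_lookup)
  qed
  then show "x \<in> rel_ideal I S" using p by simp
qed

lemma qeq_lk: "qeq I S (lk p) (lk q) \<longleftrightarrow> p - q \<in> Jset (gens I S) (Rpm I S)"
  by (auto simp: qeq_def rel_ideal_eq fa_diff_lookup)

lemma J_Apm: "x \<in> Jset G R \<Longrightarrow> R \<in> Apm G \<Longrightarrow> x \<in> Apm G"
  by (induct rule: Jset.induct) auto

lemma J_add: "x \<in> Jset G R \<Longrightarrow> y \<in> Jset G R \<Longrightarrow> x + y \<in> Jset G R"
  by (induct rule: Jset.induct) (auto simp: add.assoc intro: Jset.step)

lemma J_uminus: "x \<in> Jset G R \<Longrightarrow> - x \<in> Jset G R"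
proof (induct rule: Jset.induct)
  case zero then show ?case by (simp add: Jset.zero)
next
  case (step a b x)
  then have "(-a) * R * b + (-x) \<in> Jset G R" by (intro Jset.step) auto
  then show ?case by (simp add: algebra_simps)
qed

lemma J_diff: "x \<in> Jset G R \<Longrightarrow> y \<in> Jset G R \<Longrightarrow> x - y \<in> Jset G R"
  using J_add[OF _ J_uminus, of x G R y] by simp

lemma J_lmult: "x \<in> Jset G R \<Longrightarrow> c \<in> Apm G \<Longrightarrow> c * x \<in> Jset G R"
proof (induct rule: Jset.induct)
  case zero then show ?case by (simp add: Jset.zero)
next
  case (step a b x)
  then have "(c*a) * R * b + c * x \<in> Jset G R" by (intro Jset.step) auto
  then show ?case by (simp add: algebra_simps)
qed

lemma J_rmult: "x \<in> Jset G R \<Longrightarrow> c \<in> Apm G \<Longrightarrow> x * c \<in> Jset G R"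
proof (induct rule: Jset.induct)
  case zero then show ?case by (simp add: Jset.zero)
next
  case (step a b x)
  then have "a * R * (b * c) + x * c \<in> Jset G R" by (intro Jset.step) auto
  then show ?case by (simp add: algebra_simps)
qed

lemma J_R: "a \<in> Apm G \<Longrightarrow> b \<in> Apm G \<Longrightarrow> a * R * b \<in> Jset G R"
  using Jset.step[OF _ _ Jset.zero] by fastforce

lemma J_sum: "(\<And>i. i \<in> K \<Longrightarrow> f i \<in> Jset G R) \<Longrightarrow> sum f K \<in> Jset G R"
  by (induct K rule: infinite_finite_induct) (auto intro: Jset.zero J_add)


definition E :: "(('i,'t) fa \<Rightarrow> ('i,'t) fa) \<Rightarrow> ('i,'t) pm \<Rightarrow> ('i,'t) pm" where
  "E D p = Abs_poly_mapping (D (lk p))"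

lemma E_lk: "D (lk p) \<in> alg I S \<Longrightarrow> D (lk p) = lk (E D p) \<and> E D p \<in> Apm (gens I S)"
  unfolding E_def using alg_lk[of "D (lk p)" I S] by auto

lemma fa_smult_lookup: "fa_smult c (lk p) = lk (sc c * p)"
  by (simp add: fa_smult_def fun_eq_iff lookup_sc_mult)

lemma ball_alg: "(\<forall>x\<in>alg I S. Pr x) \<longleftrightarrow> (\<forall>p\<in>Apm (gens I S). Pr (lk p))"
  by (auto simp: alg_eq)

lemma is_der_pm:
  fixes I :: "'i set" and S :: "'t set" and D :: "('i,'t) fa \<Rightarrow> ('i,'t) fa"
  defines "A \<equiv> Apm (gens I S)" and "J \<equiv> Jset (gens I S) (Rpm I S)"
  shows "is_der I S D \<longleftrightarrow> (\<forall>p\<in>A. D (lk p) \<in> alg I S) \<and>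
    (\<forall>p\<in>A. \<forall>q\<in>A. p - q \<in> J \<longrightarrow> E D p - E D q \<in> J) \<and>
    (\<forall>p\<in>A. \<forall>q\<in>A. E D (p+q) - (E D p + E D q) \<in> J) \<and>
    (\<forall>p\<in>A. \<forall>c. E D (sc c * p) - sc c * E D p \<in> J) \<and>
    (\<forall>p\<in>A. \<forall>q\<in>A. E D (p*q) - (E D p * q + p * E D q) \<in> J)"
proof -
  have eq: "D (lk p) = lk (E D p)" if "\<forall>p\<in>A. D (lk p) \<in> alg I S" "p \<in> A" for p
    using E_lk[of D p I S] that by auto
  show ?thesis
  proof
    assume d: "is_der I S D"
    then have h: "\<forall>p\<in>A. D (lk p) \<in> alg I S" by (auto simp: is_der_def ball_alg A_def)
    have h2: "\<forall>p\<in>A. E D p \<in> A" using h E_lk[of D _ I S] by (auto simp: A_def)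
    show "(\<forall>p\<in>A. D (lk p) \<in> alg I S) \<and>
    (\<forall>p\<in>A. \<forall>q\<in>A. p - q \<in> J \<longrightarrow> E D p - E D q \<in> J) \<and>
    (\<forall>p\<in>A. \<forall>q\<in>A. E D (p+q) - (E D p + E D q) \<in> J) \<and>
    (\<forall>p\<in>A. \<forall>c. E D (sc c * p) - sc c * E D p \<in> J) \<and>
    (\<forall>p\<in>A. \<forall>q\<in>A. E D (p*q) - (E D p * q + p * E D q) \<in> J)"
      using d h h2 unfolding is_der_def ball_alg
      by (simp add: qeq_lk fa_add_lookup fa_mult_lookup fa_smult_lookup eq A_def J_def) (blast intro: lk_alg)
  next
    assume r: "(\<forall>p\<in>A. D (lk p) \<in> alg I S) \<and>
    (\<forall>p\<in>A. \<forall>q\<in>A. p - q \<in> J \<longrightarrow> E D p - E D q \<in> J) \<and>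
    (\<forall>p\<in>A. \<forall>q\<in>A. E D (p+q) - (E D p + E D q) \<in> J) \<and>
    (\<forall>p\<in>A. \<forall>c. E D (sc c * p) - sc c * E D p \<in> J) \<and>
    (\<forall>p\<in>A. \<forall>q\<in>A. E D (p*q) - (E D p * q + p * E D q) \<in> J)"
    then have h: "\<forall>p\<in>A. D (lk p) \<in> alg I S" by blast
    have h2: "\<forall>p\<in>A. E D p \<in> A" using h E_lk[of D _ I S] by (auto simp: A_def)
    show "is_der I S D"
      using r h h2 lk_alg unfolding is_der_def ball_alg
      by (simp add: qeq_lk fa_add_lookup fa_mult_lookup fa_smult_lookup eq A_def J_def lk_alg)
  qed
qed


lemma sc_comm2: "B * (sc c * p) = sc c * (B * p)"
  by (metis mult.assoc sc_comm)

lemma E_comm: "E (\<lambda>x. fa_comm (lk B) x) p = B * p - p * B"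
  by (simp add: E_def fa_comm_lookup)

lemma E_diff: "D1 (lk p) \<in> alg I S \<Longrightarrow> D2 (lk p) \<in> alg I S \<Longrightarrow>
   E (\<lambda>x. fa_diff (D1 x) (D2 x)) p = E D1 p - E D2 p"
proof -
  assume "D1 (lk p) \<in> alg I S" "D2 (lk p) \<in> alg I S"
  then have "fa_diff (D1 (lk p)) (D2 (lk p)) = lk (E D1 p - E D2 p)"
    using E_lk[of D1 p I S] E_lk[of D2 p I S] by (metis fa_diff_lookup)
  then show ?thesis by (simp add: E_def[of "\<lambda>x. fa_diff (D1 x) (D2 x)"])
qed

lemma inner_der:
  fixes I :: "'i set" and S :: "'t set"
  assumes B: "B \<in> Apm (gens I S)" and fin: "finite I" "finite S"
  shows "is_der I S (\<lambda>x. fa_comm (lk B) x)"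
proof -
  have R: "Rpm I S \<in> Apm (gens I S)" by (rule Rpm_Apm)
  show ?thesis unfolding is_der_pm E_comm
  proof (intro conjI ballI allI impI)
    fix p assume "p \<in> Apm (gens I S)"
    then show "fa_comm (lk B) (lk p) \<in> alg I S" using B by (simp add: fa_comm_lookup lk_alg)
  next
    fix p q assume pq: "p \<in> Apm (gens I S)" "q \<in> Apm (gens I S)" "p - q \<in> Jset (gens I S) (Rpm I S)"
    have "B * (p - q) - (p - q) * B \<in> Jset (gens I S) (Rpm I S)"
      using J_diff[OF J_lmult[OF pq(3) B] J_rmult[OF pq(3) B]] .
    then show "B * p - p * B - (B * q - q * B) \<in> Jset (gens I S) (Rpm I S)"
      by (simp add: algebra_simps)
  next
    fix p q :: "('i,'t) pm"
    have "B * (p + q) - (p + q) * B - (B * p - p * B + (B * q - q * B)) = 0" by (simp add: algebra_simps)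
    then show "B * (p + q) - (p + q) * B - (B * p - p * B + (B * q - q * B)) \<in> Jset (gens I S) (Rpm I S)"
      using Jset.zero by metis
    have "B * (p * q) - p * q * B - ((B * p - p * B) * q + p * (B * q - q * B)) = 0" by (simp add: algebra_simps)
    then show "B * (p * q) - p * q * B - ((B * p - p * B) * q + p * (B * q - q * B)) \<in> Jset (gens I S) (Rpm I S)"
      using Jset.zero by metis
  next
    fix p :: "('i,'t) pm" and c
    have "B * (sc c * p) - sc c * p * B - sc c * (B * p - p * B) = 0" by (simp add: algebra_simps sc_comm2)
    then show "B * (sc c * p) - sc c * p * B - sc c * (B * p - p * B) \<in> Jset (gens I S) (Rpm I S)"
      using Jset.zero by metis
  qed
qed

lemma der_diff:
  fixes I :: "'i set" and S :: "'t set"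
  assumes d1: "is_der I S D1" and d2: "is_der I S D2"
  shows "is_der I S (\<lambda>x. fa_diff (D1 x) (D2 x))"
proof -
  let ?A = "Apm (gens I S)" and ?J = "Jset (gens I S) (Rpm I S)"
  note D1 = d1[unfolded is_der_pm] and D2 = d2[unfolded is_der_pm]
  have a1: "\<forall>p\<in>?A. D1 (lk p) \<in> alg I S" and a2: "\<forall>p\<in>?A. D2 (lk p) \<in> alg I S"
    using D1 D2 by blast+
  have e: "E (\<lambda>x. fa_diff (D1 x) (D2 x)) p = E D1 p - E D2 p" if "p \<in> ?A" for p
    using a1 a2 that E_diff by blast
  have ex: "x \<in> ?J \<Longrightarrow> y \<in> ?J \<Longrightarrow> x - y = z \<Longrightarrow> z \<in> ?J" for x y z using J_diff by blast
  show ?thesis unfolding is_der_pm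
  proof (intro conjI ballI allI impI)
    fix p assume p: "p \<in> ?A"
    then show "fa_diff (D1 (lk p)) (D2 (lk p)) \<in> alg I S"
      using E_lk[of D1 p I S] E_lk[of D2 p I S] a1 a2
      by (metis fa_diff_lookup lk_alg Apm_diff)
  next
    fix p q assume pq: "p \<in> ?A" "q \<in> ?A" "p - q \<in> ?J"
    have "E D1 p - E D1 q \<in> ?J" "E D2 p - E D2 q \<in> ?J" using pq D1 D2 by blast+
    then show "E (\<lambda>x. fa_diff (D1 x) (D2 x)) p - E (\<lambda>x. fa_diff (D1 x) (D2 x)) q \<in> ?J"
      using pq by (simp only: e) (rule ex, assumption+, simp)
  next
    fix p q assume pq: "p \<in> ?A" "q \<in> ?A"
    have "E D1 (p+q) - (E D1 p + E D1 q) \<in> ?J" "E D2 (p+q) - (E D2 p + E D2 q) \<in> ?J"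
      using pq D1 D2 by blast+
    then show "E (\<lambda>x. fa_diff (D1 x) (D2 x)) (p + q) - (E (\<lambda>x. fa_diff (D1 x) (D2 x)) p + E (\<lambda>x. fa_diff (D1 x) (D2 x)) q) \<in> ?J"
      using pq by (simp only: e Apm_add) (rule ex, assumption+, simp add: algebra_simps)
    have "E D1 (p*q) - (E D1 p * q + p * E D1 q) \<in> ?J" "E D2 (p*q) - (E D2 p * q + p * E D2 q) \<in> ?J"
      using pq D1 D2 by blast+
    then show "E (\<lambda>x. fa_diff (D1 x) (D2 x)) (p * q) - (E (\<lambda>x. fa_diff (D1 x) (D2 x)) p * q + p * E (\<lambda>x. fa_diff (D1 x) (D2 x)) q) \<in> ?J"
      using pq by (simp only: e Apm_mult) (rule ex, assumption+, simp add: algebra_simps)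
  next
    fix p c assume p: "p \<in> ?A"
    have "E D1 (sc c * p) - sc c * E D1 p \<in> ?J" "E D2 (sc c * p) - sc c * E D2 p \<in> ?J"
      using p D1 D2 by blast+
    then show "E (\<lambda>x. fa_diff (D1 x) (D2 x)) (sc c * p) - sc c * E (\<lambda>x. fa_diff (D1 x) (D2 x)) p \<in> ?J"
      using p by (simp only: e Apm_mult Apm_sc) (rule ex, assumption+, simp add: algebra_simps)
  qed
qed


abbreviation Xg :: "'t \<Rightarrow> ('i,'t) pm" where "Xg t \<equiv> sg [X t] 1"

lemma Xg_Apm: "t \<in> S \<Longrightarrow> Xg t \<in> Apm (gens I S)"
  by (rule Apm_gen) (simp add: gens_def)

lemma bex_alg: "(\<exists>x\<in>alg I S. Pr x) \<longleftrightarrow> (\<exists>p\<in>Apm (gens I S). Pr (lk p))"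
  by (auto simp: alg_eq)

lemma der_E: "is_der I S D \<Longrightarrow> p \<in> Apm (gens I S) \<Longrightarrow> D (lk p) = lk (E D p) \<and> E D p \<in> Apm (gens I S)"
  using E_lk[of D p I S] by (auto simp: is_der_pm)

lemma semispecial_pm:
  fixes I :: "'i set" and S :: "'t set"
  assumes "is_der I S D"
  shows "is_semispecial I S D \<longleftrightarrow>
    (\<forall>t\<in>S. \<exists>B\<in>Apm (gens I S). E D (Xg t) - (B * Xg t - Xg t * B) \<in> Jset (gens I S) (Rpm I S))"
proof -
  have "D (fa_gen (X t)) = lk (E D (Xg t))" if "t \<in> S" for t
    using der_E[OF assms Xg_Apm[OF that]] by (simp add: fa_gen_lookup)
  then show ?thesis using assms
    by (simp add: is_semispecial_def bex_alg fa_gen_lookup fa_comm_lookup qeq_lk)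
qed

lemma der_s_pm:
  fixes I :: "'i set" and S :: "'t set"
  assumes "is_der I S D" "s \<in> S"
  shows "is_der_s I S s D \<longleftrightarrow> is_semispecial I S D \<and> E D (Xg s) \<in> Jset (gens I S) (Rpm I S)"
proof -
  have "D (fa_gen (X s)) = lk (E D (Xg s))"
    using der_E[OF assms(1) Xg_Apm[OF assms(2)]] by (simp add: fa_gen_lookup)
  then show ?thesis by (simp add: is_der_s_def fa_zero_lookup qeq_lk)
qed

lemma inner_pm:
  fixes I :: "'i set" and S :: "'t set"
  assumes "is_der I S D"
  shows "is_inner I S D \<longleftrightarrow> (\<exists>B\<in>Apm (gens I S). \<forall>p\<in>Apm (gens I S). E D p - (B * p - p * B) \<in> Jset (gens I S) (Rpm I S))"
  unfolding is_inner_def bex_alg ball_alg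
  using der_E[OF assms] by (auto simp: fa_comm_lookup qeq_lk)

lemma sum_comm_lk:
  "(\<lambda>w. \<Sum>n<N. c n * fa_comm (fa_pow (fa_gen (X s)) n) (lk p) w)
   = lk (\<Sum>n<N. sc (c n) * (Xg s ^ n * p - p * Xg s ^ n))"
  by (simp add: fun_eq_iff lookup_sum lookup_sc_mult fa_gen_lookup fa_pow_lookup fa_comm_lookup)

lemma sum_comm_pm: "(\<Sum>n<N. sc (c n) * (Y ^ n * p - p * Y ^ n)) = 
   (\<Sum>n<N. sc (c n) * Y ^ n) * p - p * (\<Sum>n<N. sc (c n) * Y ^ n)"
  by (simp add: sum_distrib_left sum_distrib_right algebra_simps sum_subtractf sc_comm2 mult.assoc)



lemma sc_mult: "sc (a * b) = sc a * sc b"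
  by (simp add: sc_def mult_single plus_list_def)
lemma sc_add: "sc (a + b) = sc a + sc b"
  by (simp add: sc_def single_add)
lemma sc_one: "sc 1 = 1"
  by (simp add: sc_def zero_list_def[symmetric])
lemma sc_zero: "sc 0 = 0"
  by (simp add: sc_def)
lemma sc_uminus: "sc (- a) = - sc a"
  by (simp add: sc_def single_uminus)
lemma sc_power: "sc (a ^ n) = sc a ^ n"
  by (induct n) (simp_all add: sc_one sc_mult)

lemma lk_left:
  fixes h C :: "'a list \<Rightarrow>\<^sub>0 rat"
  assumes hm: "\<forall>w. lk h w \<noteq> 0 \<longrightarrow> length w = m"
  shows "lk (h * C) w = lk h (take m w) * lk C (drop m w)"
proof -
  have "lk (h * C) w = (\<Sum>k\<le>length w. if k = m then lk h (take m w) * lk C (drop m w) else 0)"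
    unfolding lookup_mult_list
  proof (rule sum.cong)
    fix k assume k: "k \<in> {..length w}"
    show "lk h (take k w) * lk C (drop k w) = (if k = m then lk h (take m w) * lk C (drop m w) else 0)"
    proof (cases "k = m")
      case False
      have "length (take k w) = k" using k by simp
      then have "lk h (take k w) = 0" using hm False by metis
      then show ?thesis using False by simp
    qed simp
  qed simp
  also have "\<dots> = (if m \<le> length w then lk h (take m w) * lk C (drop m w) else 0)"
    by (simp only: sum.delta finite_atMost atMost_iff)
  also have "\<dots> = lk h (take m w) * lk C (drop m w)"
  proof (cases "m \<le> length w")
    case False
    then have "length (take m w) \<noteq> m" by simp
    then have "lk h (take m w) = 0" using hm by metis
    then show ?thesis by simp
  qed simp
  finally show ?thesis .
qed

lemma lk_right:
  fixes h C :: "'a list \<Rightarrow>\<^sub>0 rat"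
  assumes hm: "\<forall>w. lk h w \<noteq> 0 \<longrightarrow> length w = m" and vm: "length v = m"
  shows "lk (C * h) (u @ v) = lk C u * lk h v"
proof -
  let ?w = "u @ v"
  have "lk (C * h) ?w = (\<Sum>k\<le>length ?w. if k = length u then lk C u * lk h v else 0)"
    unfolding lookup_mult_list
  proof (rule sum.cong)
    fix k assume k: "k \<in> {..length ?w}"
    show "lk C (take k ?w) * lk h (drop k ?w) = (if k = length u then lk C u * lk h v else 0)"
    proof (cases "k = length u")
      case False
      have "length (drop k ?w) = length u + m - k" using vm by simp
      also have "\<dots> \<noteq> m" using False k vm by simp
      finally have "lk h (drop k ?w) = 0" using hm by metis
      then show ?thesis using False by simp
    qed simp
  qed simp
  also have "\<dots> = lk C u * lk h v"
    by (simp only: sum.delta finite_atMost atMost_iff) simp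
  finally show ?thesis .
qed

lemma lk_gen_len: "lk (sg [a] (1::rat)) w \<noteq> 0 \<longrightarrow> length w = 1"
  by (auto simp: lookup_single when_def)

lemma one_sg: "(1::'a list \<Rightarrow>\<^sub>0 rat) = sg [] 1"
  by (metis single_one zero_list_def)

lemma pow_gen: "(sg [a] (1::rat)) ^ n = sg (replicate n a) 1"
proof (induct n)
  case 0 then show ?case by (simp add: one_sg)
next
  case (Suc n) then show ?case by (simp add: mult_single plus_list_def)
qed

lemma comm_sum_pow: "(\<Sum>n<N. sc (d n) * Y ^ n) * Y = Y * (\<Sum>n<N. sc (d n) * (Y::'a list \<Rightarrow>\<^sub>0 rat) ^ n)"
  by (simp add: sum_distrib_left sum_distrib_right mult.assoc power_commutes sc_comm2)

lemma cent_gen: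
  fixes C :: "'a list \<Rightarrow>\<^sub>0 rat"
  assumes comm: "C * sg [a] 1 = sg [a] 1 * C"
  shows "\<exists>N c. C = (\<Sum>n<N. sc (c n) * sg [a] 1 ^ n)"
proof -
  let ?x = "sg [a] (1::rat)"
  have rec: "lk C u = lk ?x (take 1 (u @ [a])) * lk C (drop 1 (u @ [a]))" for u
  proof -
    have "lk C u = lk (C * ?x) (u @ [a])"
      using lk_right[where h="?x" and m=1 and u=u and v="[a]" and C=C, OF allI[OF lk_gen_len]] by simp
    also have "\<dots> = lk (?x * C) (u @ [a])" by (simp add: comm)
    also have "\<dots> = lk ?x (take 1 (u @ [a])) * lk C (drop 1 (u @ [a]))"
      by (rule lk_left[OF allI[OF lk_gen_len]])
    finally show ?thesis .
  qed
  have zero: "lk C (replicate j a @ b # v) = 0" if "b \<noteq> a" for j b v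
    using that
  proof (induct j arbitrary: v)
    case 0 then show ?case using rec[of "b # v"] by (simp add: lookup_single when_def)
  next
    case (Suc j)
    then show ?case using rec[of "a # replicate j a @ b # v"] Suc(1)[of "v @ [a]"] by simp
  qed
  have rep: "lk C u \<noteq> 0 \<Longrightarrow> u = replicate (length u) a" for u
  proof (rule ccontr)
    assume nz: "lk C u \<noteq> 0" and "u \<noteq> replicate (length u) a"
    then obtain b where b: "b \<in> set u" "b \<noteq> a" by (metis in_set_replicate replicate_eqI)
    define j where "j = length (takeWhile (\<lambda>c. c = a) u)"
    have "u = takeWhile (\<lambda>c. c = a) u @ dropWhile (\<lambda>c. c = a) u" by simp
    moreover have "takeWhile (\<lambda>c. c = a) u = replicate j a"
      unfolding j_def by (metis (mono_tags) replicate_length_same set_takeWhileD)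
    moreover obtain b' v where "dropWhile (\<lambda>c. c = a) u = b' # v" "b' \<noteq> a"
      using b by (metis (full_types) dropWhile_eq_Nil_conv hd_dropWhile list.exhaust list.sel(1))
    ultimately have "u = replicate j a @ b' # v" "b' \<noteq> a" by auto
    then show False using zero nz by metis
  qed
  define N where "N = Suc (Max (insert 0 (length ` ks C)))"
  have lt: "lk C u \<noteq> 0 \<Longrightarrow> length u < N" for u
  proof -
    assume "lk C u \<noteq> 0"
    then have "length u \<in> insert 0 (length ` ks C)" by (simp add: in_keys_iff)
    then show ?thesis unfolding N_def by (simp add: le_imp_less_Suc)
  qed
  have "C = (\<Sum>n<N. sc (lk C (replicate n a)) * ?x ^ n)"
  proof (rule poly_mapping_eqI)
    fix w
    have "lk (\<Sum>n<N. sc (lk C (replicate n a)) * ?x ^ n) w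
       = (\<Sum>n<N. if n = length w \<and> w = replicate (length w) a then lk C w else 0)"
      unfolding lookup_sum lookup_sc_mult pow_gen
      by (rule sum.cong) (auto simp: lookup_single when_def)
    also have "\<dots> = lk C w"
    proof (cases "lk C w = 0")
      case True then show ?thesis by (simp only: True if_cancel sum.neutral_const)
    next
      case False
      then have "(\<Sum>n<N. if n = length w \<and> w = replicate (length w) a then lk C w else 0)
          = (\<Sum>n<N. if n = length w then lk C w else 0)" using rep[of w] by simp
      then show ?thesis using lt[of w] False by simp
    qed
    finally show "lk C w = lk (\<Sum>n<N. sc (lk C (replicate n a)) * ?x ^ n) w" by simp
  qed
  then show ?thesis by (intro exI[of _ N] exI[of _ "\<lambda>n. lk C (replicate n a)"])
qed



definition om :: "'i set \<Rightarrow> ('i,'t) pm" where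
  "om I = (\<Sum>i\<in>I. sg [P i, Q i] 1 - sg [Q i, P i] 1)"

definition pq :: "'i \<Rightarrow> nat \<Rightarrow> ('i,'t) gen list" where
  "pq i n = concat (replicate n [P i, Q i])"

lemma pq_Suc: "pq i (Suc n) = P i # Q i # pq i n"
  by (simp add: pq_def)
lemma pq_snoc: "pq i n @ [P i, Q i] = pq i (Suc n)"
  unfolding pq_def by (induct n) auto
lemma pq_len: "length (pq i n) = 2 * n"
  unfolding pq_def by (induct n) auto

lemma lk_om: "lk (om I) w = (\<Sum>i\<in>I. (if w = [P i, Q i] then 1 else 0) - (if w = [Q i, P i] then 1 else 0))"
  by (simp add: om_def lookup_sum lookup_minus lookup_single when_def eq_commute)

lemma om_len: "\<forall>w. lk (om I) w \<noteq> 0 \<longrightarrow> length w = 2"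
proof (intro allI impI)
  fix w assume "lk (om I) w \<noteq> 0"
  then obtain i where "(if w = [P i, Q i] then 1 else 0) - (if w = [Q i, P i] then 1 else (0::rat)) \<noteq> 0"
    unfolding lk_om by (meson sum.neutral)
  then show "length w = 2" by (auto split: if_splits)
qed

lemma om_pq: "finite I \<Longrightarrow> i1 \<in> I \<Longrightarrow> lk (om I) [P i1, Q i1] = 1"
  unfolding lk_om by (simp add: sum.delta)
lemma om_qp: "finite I \<Longrightarrow> i1 \<in> I \<Longrightarrow> lk (om I) [Q i1, P i1] = -1"
  unfolding lk_om by (simp add: sum.delta sum_subtractf sum_negf)

lemma pow_om:
  fixes I :: "'i set"
  assumes "finite I" "i1 \<in> I"
  shows "lk (om I ^ n :: ('i,'t) pm) (pq i1 m) = (if n = m then 1 else 0)"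
proof (induct n arbitrary: m)
  case 0
  then show ?case by (cases m) (simp_all add: lookup_one pq_def zero_list_def when_def)
next
  case (Suc n)
  have "lk (om I ^ Suc n :: ('i,'t) pm) (pq i1 m) = lk (om I :: ('i,'t) pm) (take 2 (pq i1 m)) * lk (om I ^ n :: ('i,'t) pm) (drop 2 (pq i1 m))"
    unfolding power_Suc by (rule lk_left[OF om_len])
  also have "\<dots> = (if Suc n = m then 1 else 0)"
  proof (cases m)
    case 0
    have "lk (om I :: ('i,'t) pm) [] = 0" using om_len[of I] by fastforce
    then show ?thesis using 0 by (simp add: pq_def)
  next
    case (Suc m') then show ?thesis using Suc.hyps[of m'] by (simp add: pq_Suc om_pq[OF assms])
  qed
  finally show ?case .
qed

lemma cent_om:
  fixes C :: "('i,'t) pm"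
  assumes fin: "finite I" and i1: "i1 \<in> I" and comm: "C * om I = om I * C"
  shows "\<exists>N c. C = (\<Sum>n<N. sc (c n) * om I ^ n)"
proof -
  let ?w = "om I :: ('i,'t) pm"
  define N where "N = Suc (Max (insert 0 (length ` ks C)))"
  have lt: "lk C u \<noteq> 0 \<Longrightarrow> length u < N" for u
  proof -
    assume "lk C u \<noteq> 0"
    then have "length u \<in> insert 0 (length ` ks C)" by (simp add: in_keys_iff)
    then show ?thesis unfolding N_def by (simp add: le_imp_less_Suc)
  qed
  define d where "d n = lk C (pq i1 n)" for n
  define C' where "C' = C - (\<Sum>n<N. sc (d n) * ?w ^ n)"
  have comm': "C' * ?w = ?w * C'"
  proof -
    have "C' * ?w = C * ?w - (\<Sum>n<N. sc (d n) * ?w ^ n) * ?w" unfolding C'_def by (rule left_diff_distrib)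
    also have "\<dots> = ?w * C - ?w * (\<Sum>n<N. sc (d n) * ?w ^ n)" by (simp only: comm comm_sum_pow)
    also have "\<dots> = ?w * C'" unfolding C'_def by (rule right_diff_distrib[symmetric])
    finally show ?thesis .
  qed
  have vpq: "lk C' (pq i1 m) = 0" for m
  proof -
    have "lk (\<Sum>n<N. sc (d n) * ?w ^ n) (pq i1 m) = (\<Sum>n<N. if n = m then d n else 0)"
      unfolding lookup_sum lookup_sc_mult pow_om[OF fin i1] by (rule sum.cong) auto
    also have "\<dots> = (if m < N then d m else 0)" by (simp add: sum.delta)
    also have "\<dots> = d m"
    proof (cases "m < N")
      case False
      then have "\<not> length (pq i1 m) < N" by (simp add: pq_len)
      then have "lk C (pq i1 m) = 0" using lt[of "pq i1 m"] by blast
      then show ?thesis using False by (simp add: d_def)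
    qed simp
    finally show ?thesis by (simp add: C'_def lookup_minus d_def)
  qed
  have rec: "lk C' u = lk ?w (take 2 (u @ [P i1, Q i1])) * lk C' (drop 2 (u @ [P i1, Q i1]))" for u
  proof -
    have "lk (C' * ?w) (u @ [P i1, Q i1]) = lk C' u * lk ?w [P i1, Q i1]"
      by (rule lk_right[OF om_len]) simp
    then have "lk C' u = lk (C' * ?w) (u @ [P i1, Q i1])"
      by (simp add: om_pq[OF fin i1])
    also have "\<dots> = lk (?w * C') (u @ [P i1, Q i1])" by (subst comm') (rule refl)
    also have "\<dots> = lk ?w (take 2 (u @ [P i1, Q i1])) * lk C' (drop 2 (u @ [P i1, Q i1]))"
      by (rule lk_left[OF om_len])
    finally show ?thesis .
  qed
  have stepj: "2 * j \<le> length u \<Longrightarrow> lk C' (drop (2 * j) u @ pq i1 j) = 0 \<Longrightarrow> lk C' u = 0" for j u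
  proof (induct j)
    case 0 then show ?case by (simp add: pq_def)
  next
    case (Suc j)
    let ?v = "drop (2 * j) u @ pq i1 j"
    have len: "length (drop (2 * j) u) \<ge> 2" using Suc.prems(1) by simp
    have "drop 2 (?v @ [P i1, Q i1]) = drop (2 * Suc j) u @ pq i1 (Suc j)"
      using len by (simp add: pq_snoc[symmetric])
    then have "lk C' ?v = 0" using rec[of ?v] Suc.prems(2) by simp
    then show ?case using Suc.hyps Suc.prems(1) by simp
  qed
  have qv: "lk C' (Q i1 # pq i1 m) = 0" for m
  proof -
    have "lk C' (Q i1 # pq i1 m) = lk ?w [Q i1, P i1] * lk C' (Q i1 # pq i1 m)"
      using rec[of "Q i1 # pq i1 m"] by (simp add: pq_snoc pq_Suc)
    then show ?thesis by (simp add: om_qp[OF fin i1])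
  qed
  have allz: "lk C' u = 0" for u
  proof -
    define m where "m = length u div 2"
    have m: "length u = 2 * m \<or> length u = 2 * m + 1" unfolding m_def by presburger
    then show ?thesis
    proof
      assume "length u = 2 * m"
      then show ?thesis using stepj[of m u] vpq[of m] by simp
    next
      assume lu: "length u = 2 * m + 1"
      have "length (drop (2 * m) u) = 1" using lu by simp
      then obtain c where c: "drop (2 * m) u = [c]"
        by (cases "drop (2 * m) u") auto
      have "lk C' (c # pq i1 m) = lk ?w (take 2 (c # pq i1 m @ [P i1, Q i1])) * lk C' (Q i1 # pq i1 m)"
        using rec[of "c # pq i1 m"] by (simp add: pq_snoc pq_Suc)
      then have "lk C' (c # pq i1 m) = 0" using qv by simp
      then show ?thesis using stepj[of m u] lu c by simp
    qed
  qed
  have "C' = 0" by (rule poly_mapping_eqI) (simp add: allz)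
  then show ?thesis unfolding C'_def by (intro exI[of _ N] exI[of _ d]) simp
qed



definition M :: "('a \<Rightarrow> ('a list \<Rightarrow>\<^sub>0 rat)) \<Rightarrow> 'a list \<Rightarrow> ('a list \<Rightarrow>\<^sub>0 rat)" where
  "M \<sigma> w = prod_list (map \<sigma> w)"

definition phi :: "('a \<Rightarrow> ('a list \<Rightarrow>\<^sub>0 rat)) \<Rightarrow> ('a list \<Rightarrow>\<^sub>0 rat) \<Rightarrow> ('a list \<Rightarrow>\<^sub>0 rat)" where
  "phi \<sigma> p = (\<Sum>w\<in>ks p. sc (lk p w) * M \<sigma> w)"

lemma M_append: "M \<sigma> (u @ v) = M \<sigma> u * M \<sigma> v"
  by (simp add: M_def)

lemma phi_sup: "finite K \<Longrightarrow> ks p \<subseteq> K \<Longrightarrow> phi \<sigma> p = (\<Sum>w\<in>K. sc (lk p w) * M \<sigma> w)"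
  unfolding phi_def
  by (rule sum.mono_neutral_left) (auto simp: in_keys_iff sc_zero)

lemma phi_add: "phi \<sigma> (p + q) = phi \<sigma> p + phi \<sigma> q"
proof -
  let ?K = "ks p \<union> ks q"
  have "phi \<sigma> (p + q) = (\<Sum>w\<in>?K. sc (lk (p + q) w) * M \<sigma> w)"
    by (rule phi_sup) (auto dest: subsetD[OF keys_add])
  also have "\<dots> = (\<Sum>w\<in>?K. sc (lk p w) * M \<sigma> w) + (\<Sum>w\<in>?K. sc (lk q w) * M \<sigma> w)"
    by (simp add: lookup_add sc_add distrib_right sum.distrib)
  also have "\<dots> = phi \<sigma> p + phi \<sigma> q"
    by (simp add: phi_sup[symmetric])
  finally show ?thesis .
qed

lemma phi_zero: "phi \<sigma> 0 = 0"
  by (simp add: phi_def)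

lemma phi_uminus: "phi \<sigma> (- p) = - phi \<sigma> p"
proof -
  have "phi \<sigma> (- p) + phi \<sigma> p = 0" using phi_add[of \<sigma> "-p" p] by (simp add: phi_zero)
  then show ?thesis by (simp add: eq_neg_iff_add_eq_0)
qed

lemma phi_diff: "phi \<sigma> (p - q) = phi \<sigma> p - phi \<sigma> q"
  using phi_add[of \<sigma> p "-q"] by (simp add: phi_uminus)

lemma phi_single: "phi \<sigma> (sg w c) = sc c * M \<sigma> w"
proof -
  have "phi \<sigma> (sg w c) = (\<Sum>v\<in>{w}. sc (lk (sg w c) v) * M \<sigma> v)"
    by (rule phi_sup) auto
  then show ?thesis by simp
qed

lemma phi_sum: "phi \<sigma> (sum f K) = (\<Sum>k\<in>K. phi \<sigma> (f k))"
  by (induct K rule: infinite_finite_induct) (simp_all add: phi_zero phi_add)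

lemma expand: "p = (\<Sum>w\<in>ks p. sg w (lk p w))"
proof (rule poly_mapping_eqI)
  fix v
  show "lk p v = lk (\<Sum>w\<in>ks p. sg w (lk p w)) v"
    by (cases "v \<in> ks p") (simp_all add: lookup_sum lookup_single when_def in_keys_iff)
qed

lemma sc_term: "sc (a * b) * (U * V) = (sc a * U) * (sc b * (V :: 'a list \<Rightarrow>\<^sub>0 rat))"
  by (simp only: sc_mult mult.assoc sc_comm2[of U b V])

lemma phi_mult: "phi \<sigma> (p * q) = phi \<sigma> p * phi \<sigma> q"
proof -
  have "p * q = (\<Sum>w\<in>ks p. sg w (lk p w)) * (\<Sum>w\<in>ks q. sg w (lk q w))"
    using expand[of p] expand[of q] by simp
  also have "\<dots> = (\<Sum>u\<in>ks p. \<Sum>v\<in>ks q. sg (u @ v) (lk p u * lk q v))"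
    by (simp add: sum_product mult_single plus_list_def)
  finally have pq: "p * q = \<dots>" .
  have "phi \<sigma> (p * q) = (\<Sum>u\<in>ks p. \<Sum>v\<in>ks q. sc (lk p u * lk q v) * M \<sigma> (u @ v))"
    by (simp add: pq phi_sum phi_single)
  also have "\<dots> = (\<Sum>u\<in>ks p. \<Sum>v\<in>ks q. (sc (lk p u) * M \<sigma> u) * (sc (lk q v) * M \<sigma> v))"
    by (simp only: M_append sc_term)
  also have "\<dots> = phi \<sigma> p * phi \<sigma> q"
    by (simp add: phi_def sum_product)
  finally show ?thesis .
qed

lemma phi_one: "phi \<sigma> 1 = 1"
  using phi_single[of \<sigma> "[]" 1] by (simp add: M_def sc_one flip: one_sg)

lemma phi_sc: "phi \<sigma> (sc c) = sc c"
  by (simp add: sc_def phi_single M_def)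

lemma phi_gen: "phi \<sigma> (sg [g] 1) = \<sigma> g"
  by (simp add: phi_single sc_one M_def)

lemma phi_power: "phi \<sigma> (p ^ n) = phi \<sigma> p ^ n"
  by (induct n) (simp_all add: phi_one phi_mult)

lemma Apm_mono: "G \<subseteq> G' \<Longrightarrow> p \<in> Apm G \<Longrightarrow> p \<in> Apm G'"
  by (auto simp: Apm_def)

lemma M_Apm: "set w \<subseteq> G \<Longrightarrow> (\<And>g. g \<in> G \<Longrightarrow> \<sigma> g \<in> Apm G') \<Longrightarrow> M \<sigma> w \<in> Apm G'"
  by (induct w) (simp_all add: M_def)

lemma phi_Apm:
  assumes "p \<in> Apm G" "\<And>g. g \<in> G \<Longrightarrow> \<sigma> g \<in> Apm G'"
  shows "phi \<sigma> p \<in> Apm G'"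
  unfolding phi_def
proof (rule Apm_sum)
  fix w assume "w \<in> ks p"
  then have "set w \<subseteq> G" using assms(1) by (auto simp: Apm_def)
  then show "sc (lk p w) * M \<sigma> w \<in> Apm G'" by (intro Apm_mult Apm_sc M_Apm assms(2))
qed

lemma word_J:
  assumes "set w \<subseteq> G" "\<And>g. g \<in> G \<Longrightarrow> sg [g] 1 - \<sigma> g \<in> Jset G R" "\<And>g. g \<in> G \<Longrightarrow> \<sigma> g \<in> Apm G"
  shows "sg w 1 - M \<sigma> w \<in> Jset G R"
  using assms(1)
proof (induct w)
  case Nil then show ?case by (simp add: M_def one_sg[symmetric] Jset.zero)
next
  case (Cons g w)
  have gG: "g \<in> G" and wG: "set w \<subseteq> G" using Cons.prems by auto
  have sw: "sg w 1 \<in> Apm G" using wG by (auto simp: Apm_def)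
  have e: "sg (g # w) 1 - M \<sigma> (g # w) = (sg [g] 1 - \<sigma> g) * sg w 1 + \<sigma> g * (sg w 1 - M \<sigma> w)"
    by (simp add: M_def mult_single plus_list_def algebra_simps)
  show ?case unfolding e
    by (rule J_add[OF J_rmult[OF assms(2)[OF gG] sw] J_lmult[OF Cons.hyps[OF wG] assms(3)[OF gG]]])
qed

lemma sc_sg: "sc c * sg w 1 = sg w c"
  by (simp add: sc_def mult_single plus_list_def)

lemma phi_J:
  assumes "p \<in> Apm G" "\<And>g. g \<in> G \<Longrightarrow> sg [g] 1 - \<sigma> g \<in> Jset G R" "\<And>g. g \<in> G \<Longrightarrow> \<sigma> g \<in> Apm G"
  shows "p - phi \<sigma> p \<in> Jset G R"
proof -
  have "p - phi \<sigma> p = (\<Sum>w\<in>ks p. sc (lk p w) * (sg w 1 - M \<sigma> w))"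
    apply (subst (1) expand[of p])
    by (simp add: phi_def right_diff_distrib sum_subtractf sc_sg)
  also have "\<dots> \<in> Jset G R"
    using assms(1) by (intro J_sum J_lmult word_J assms(2,3) Apm_sc) (auto simp: Apm_def)
  finally show ?thesis .
qed

lemma phi_kill: "x \<in> Jset G R \<Longrightarrow> phi \<sigma> R = 0 \<Longrightarrow> phi \<sigma> x = 0"
  by (induct rule: Jset.induct) (simp_all add: phi_zero phi_add phi_mult)



definition Zt :: "'i set \<Rightarrow> 't set \<Rightarrow> 't \<Rightarrow> ('i,'t) pm" where
  "Zt I S t0 = - om I - (\<Sum>t\<in>S - {t0}. Xg t)"

definition sig :: "'i set \<Rightarrow> 't set \<Rightarrow> 't \<Rightarrow> ('i,'t) gen \<Rightarrow> ('i,'t) pm" where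
  "sig I S t0 g = (if g = X t0 then Zt I S t0 else sg [g] 1)"

lemma Rpm_om: "Rpm I S = om I + (\<Sum>t\<in>S. Xg t)"
  by (simp add: Rpm_def om_def mult_single plus_list_def)

lemma sg2_Apm: "a \<in> G \<Longrightarrow> b \<in> G \<Longrightarrow> sg [a, b] c \<in> Apm G"
  by (simp add: Apm_def)

lemma om_Apm: "(\<And>i. i \<in> I \<Longrightarrow> P i \<in> G \<and> Q i \<in> G) \<Longrightarrow> om I \<in> Apm G"
  unfolding om_def by (intro Apm_sum Apm_diff sg2_Apm) auto

lemma M2: "M \<sigma> [a, b] = \<sigma> a * \<sigma> b"
  by (simp add: M_def)

lemma sg2: "sg [a, b] (1::rat) = sg [a] 1 * sg [b] 1"
  by (simp add: mult_single plus_list_def)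

lemma phi_om:
  assumes "\<And>i. i \<in> I \<Longrightarrow> \<sigma> (P i) = sg [P i] 1 \<and> \<sigma> (Q i) = sg [Q i] 1"
  shows "phi \<sigma> (om I) = om I"
  unfolding om_def phi_sum phi_diff phi_single sc_one mult_1 M2
proof (rule sum.cong)
  fix i assume "i \<in> I"
  then show "\<sigma> (P i) * \<sigma> (Q i) - \<sigma> (Q i) * \<sigma> (P i) = sg [P i, Q i] 1 - sg [Q i, P i] 1"
    using assms by (simp only: sg2)
qed (rule refl)

lemma pow_neg: "(- z :: ('a list \<Rightarrow>\<^sub>0 rat)) ^ n = sc ((-1) ^ n) * z ^ n"
proof -
  have e: "sc ((-1) ^ n) = (-1 :: 'a list \<Rightarrow>\<^sub>0 rat) ^ n" by (simp only: sc_power sc_uminus sc_one)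
  show ?thesis unfolding e by (rule power_minus)
qed

lemma neg_sq: "(-1::rat) ^ n * (-1) ^ n = 1"
  by (induct n) auto

lemma sc_neg_pow: "sc d * w ^ n = sc (d * (-1) ^ n) * (- w :: 'a list \<Rightarrow>\<^sub>0 rat) ^ n"
proof -
  have "sc (d * (-1) ^ n) * (- w) ^ n = (sc (d * (-1) ^ n) * sc ((-1) ^ n)) * w ^ n"
    by (simp only: pow_neg mult.assoc)
  also have "\<dots> = sc (d * ((-1) ^ n * (-1) ^ n)) * w ^ n"
    by (simp only: sc_mult[symmetric] mult.assoc)
  also have "\<dots> = sc d * w ^ n" by (simp only: neg_sq mult_1_right)
  finally show ?thesis by simp
qed

lemma KEY:
  fixes I :: "'i set" and S :: "'t set"
  assumes fin: "finite I" "finite S" and s: "s \<in> S" and B: "B \<in> Apm (gens I S)"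
    and comm: "B * Xg s - Xg s * B \<in> Jset (gens I S) (Rpm I S)"
  shows "\<exists>N c. B - (\<Sum>n<N. sc (c n) * Xg s ^ n) \<in> Jset (gens I S) (Rpm I S)"
proof -
  let ?G = "gens I S" and ?R = "Rpm I S"
  let ?J = "Jset ?G ?R"
  obtain t0 where t0: "t0 \<in> S" "t0 \<noteq> s \<or> S = {s}"
    using s by blast
  let ?G' = "?G - {X t0}"
  let ?\<sigma> = "sig I S t0"
  have GG: "?G' \<subseteq> ?G" by blast
  have sigA': "?\<sigma> g \<in> Apm ?G'" if "g \<in> ?G" for g
  proof (cases "g = X t0")
    case True
    have "om I \<in> Apm ?G'" by (rule om_Apm) (auto simp: gens_def)
    moreover have "(\<Sum>t\<in>S - {t0}. Xg t) \<in> Apm ?G'" by (intro Apm_sum Apm_gen) (auto simp: gens_def)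
    ultimately show ?thesis using True by (simp add: sig_def Zt_def)
  next
    case False then show ?thesis using that by (simp add: sig_def Apm_gen)
  qed
  have sigA: "?\<sigma> g \<in> Apm ?G" if "g \<in> ?G" for g using sigA'[OF that] Apm_mono[OF GG] by blast
  have RJ: "?R \<in> ?J" using J_R[of 1 ?G 1 ?R] by simp
  have sigJ: "sg [g] 1 - ?\<sigma> g \<in> ?J" if "g \<in> ?G" for g
  proof (cases "g = X t0")
    case True
    have "sg [g] 1 - ?\<sigma> g = om I + (Xg t0 + (\<Sum>t\<in>S - {t0}. Xg t))"
      using True by (simp add: sig_def Zt_def)
    also have "\<dots> = ?R" by (simp add: Rpm_om sum.remove[OF fin(2) t0(1)])
    finally show ?thesis using RJ by simp
  next
    case False then show ?thesis by (simp add: sig_def Jset.zero)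
  qed
  have phiR: "phi ?\<sigma> ?R = 0"
  proof -
    have "phi ?\<sigma> (om I) = om I" by (rule phi_om) (simp add: sig_def)
    moreover have "phi ?\<sigma> (\<Sum>t\<in>S. Xg t) = Zt I S t0 + (\<Sum>t\<in>S - {t0}. Xg t)"
    proof -
      have "phi ?\<sigma> (\<Sum>t\<in>S. Xg t) = (\<Sum>t\<in>S. ?\<sigma> (X t))" by (simp only: phi_sum phi_gen)
      also have "\<dots> = ?\<sigma> (X t0) + (\<Sum>t\<in>S - {t0}. ?\<sigma> (X t))" by (rule sum.remove[OF fin(2) t0(1)])
      also have "(\<Sum>t\<in>S - {t0}. ?\<sigma> (X t)) = (\<Sum>t\<in>S - {t0}. Xg t)"
        by (rule sum.cong) (auto simp: sig_def)
      also have "?\<sigma> (X t0) = Zt I S t0" by (simp add: sig_def)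
      finally show ?thesis .
    qed
    ultimately show ?thesis by (simp add: Rpm_om phi_add Zt_def)
  qed
  define C where "C = phi ?\<sigma> B"
  define z where "z = ?\<sigma> (X s)"
  have CA: "C \<in> Apm ?G'" unfolding C_def using B sigA' by (rule phi_Apm)
  have commC: "C * z = z * C"
  proof -
    have "phi ?\<sigma> (B * Xg s - Xg s * B) = 0" by (rule phi_kill[OF comm phiR])
    then show ?thesis by (simp add: phi_diff phi_mult phi_gen C_def z_def)
  qed
  have "\<exists>N c. C = (\<Sum>n<N. sc (c n) * z ^ n)"
  proof (cases "t0 = s")
    case False
    then have "z = Xg s" by (simp add: z_def sig_def)
    then show ?thesis using cent_gen commC by simp
  next
    case True
    then have S1: "S = {s}" using t0 by blast
    then have zom: "z = - om I" using True by (simp add: z_def sig_def Zt_def)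
    show ?thesis
    proof (cases "I = {}")
      case False
      then obtain i1 where i1: "i1 \<in> I" by blast
      have "C * om I = om I * C" using commC zom by simp
      then obtain N d where "C = (\<Sum>n<N. sc (d n) * om I ^ n)"
        using cent_om[OF fin(1) i1] by blast
      also have "\<dots> = (\<Sum>n<N. sc (d n * (-1) ^ n) * z ^ n)"
        unfolding zom by (rule sum.cong) (rule refl, rule sc_neg_pow)
      finally show ?thesis by (intro exI[of _ N] exI[of _ "\<lambda>n. d n * (-1) ^ n"])
    next
      case True
      then have "?G' = {}" using S1 \<open>t0 = s\<close> by (auto simp: gens_def)
      note G0 = this
      have k: "w = []" if "w \<in> ks C" for w
      proof -
        have "set w \<subseteq> ?G'" using CA that unfolding Apm_def by blast
        then have "set w = {}" unfolding G0 by (rule subset_empty[THEN iffD1])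
        then show ?thesis by simp
      qed
      have "C = sc (lk C [])"
      proof (rule poly_mapping_eqI)
        fix w show "lk C w = lk (sc (lk C [])) w"
          using k[of w] by (cases "w = []") (auto simp: sc_def lookup_single when_def in_keys_iff)
      qed
      then have "C = (\<Sum>n<1. sc ((\<lambda>_. lk C []) n) * z ^ n)" by simp
      then show ?thesis by (intro exI[of _ 1] exI[of _ "\<lambda>_. lk C []"])
    qed
  qed
  then obtain N c where Cz: "C = (\<Sum>n<N. sc (c n) * z ^ n)" by blast
  let ?P = "\<Sum>n<N. sc (c n) * Xg s ^ n"
  have PA: "?P \<in> Apm ?G" by (intro Apm_sum Apm_mult Apm_sc Apm_power Xg_Apm[OF s])
  have "phi ?\<sigma> ?P = C"
    by (simp add: Cz phi_sum phi_mult phi_sc phi_power phi_gen z_def)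
  then have "B - ?P = (B - phi ?\<sigma> B) - (?P - phi ?\<sigma> ?P)" by (simp add: C_def)
  also have "\<dots> \<in> ?J"
    by (intro J_diff phi_J B PA sigJ sigA)
  finally show ?thesis by blast
qed


theorem lemma7p6:
  fixes I :: "'i set" and S :: "'t set" and s :: 't
  assumes "finite I" and "finite S" and "s \<in> S"
  shows "(\<forall>D. is_semispecial I S D \<longrightarrow>
            (\<exists>D'. is_der_s I S s D' \<and>
               (\<exists>B\<in>alg I S. \<forall>x\<in>alg I S. qeq I S (D x) (fa_add (D' x) (fa_comm B x)))))
       \<and> (\<forall>n. is_der_s I S s (\<lambda>x. fa_comm (fa_pow (fa_gen (X s)) n) x))
       \<and> (\<forall>D. is_der_s I S s D \<longrightarrow>
            (is_inner I S D \<longleftrightarrow>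
              (\<exists>N (c :: nat \<Rightarrow> rat). \<forall>x\<in>alg I S.
                 qeq I S (D x) (\<lambda>w. \<Sum>n<N. c n * fa_comm (fa_pow (fa_gen (X s)) n) x w))))"
proof (intro conjI allI impI)
  let ?A = "Apm (gens I S)" and ?J = "Jset (gens I S) (Rpm I S)"
  have Xs: "Xg s \<in> ?A" using Xg_Apm assms(3) .
  {
    fix D assume ss: "is_semispecial I S D"
    then have d: "is_der I S D" by (simp add: is_semispecial_def)
    from ss[unfolded semispecial_pm[OF d]] assms(3) obtain Bs where
      Bs: "Bs \<in> ?A" "E D (Xg s) - (Bs * Xg s - Xg s * Bs) \<in> ?J" by blast
    let ?D' = "\<lambda>x. fa_diff (D x) (fa_comm (lk Bs) x)"
    have d': "is_der I S ?D'" by (rule der_diff[OF d inner_der[OF Bs(1) assms(1,2)]])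
    have eD': "E ?D' p = E D p - (Bs * p - p * Bs)" if "p \<in> ?A" for p
    proof -
      have "D (lk p) \<in> alg I S" using der_E[OF d that] lk_alg by metis
      moreover have "fa_comm (lk Bs) (lk p) \<in> alg I S" using Bs that by (simp add: fa_comm_lookup lk_alg)
      ultimately show ?thesis by (simp add: E_diff E_comm)
    qed
    have "is_der_s I S s ?D'"
      unfolding der_s_pm[OF d' assms(3)] semispecial_pm[OF d']
    proof (intro conjI ballI)
      fix t assume t: "t \<in> S"
      from ss[unfolded semispecial_pm[OF d]] t obtain Bt where
        Bt: "Bt \<in> ?A" "E D (Xg t) - (Bt * Xg t - Xg t * Bt) \<in> ?J" by blast
      have "E ?D' (Xg t) - ((Bt - Bs) * Xg t - Xg t * (Bt - Bs)) = E D (Xg t) - (Bt * Xg t - Xg t * Bt)"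
        using eD'[OF Xg_Apm[OF t]] by (simp add: algebra_simps)
      then show "\<exists>B\<in>?A. E ?D' (Xg t) - (B * Xg t - Xg t * B) \<in> ?J"
        using Bt Bs by (intro bexI[of _ "Bt - Bs"]) auto
    next
      show "E ?D' (Xg s) \<in> ?J" using eD'[OF Xs] Bs by simp
    qed
    moreover have "\<forall>x\<in>alg I S. qeq I S (D x) (fa_add (?D' x) (fa_comm (lk Bs) x))"
      unfolding ball_alg
    proof
      fix p assume p: "p \<in> ?A"
      have "?D' (lk p) = lk (E D p - (Bs * p - p * Bs))"
        using der_E[OF d p] by (simp add: fa_comm_lookup fa_diff_lookup)
      then show "qeq I S (D (lk p)) (fa_add (?D' (lk p)) (fa_comm (lk Bs) (lk p)))"
        using der_E[OF d p] by (simp add: fa_comm_lookup fa_add_lookup qeq_lk Jset.zero)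
    qed
    moreover have "lk Bs \<in> alg I S" using Bs lk_alg by blast
    ultimately show "\<exists>D'. is_der_s I S s D' \<and>
               (\<exists>B\<in>alg I S. \<forall>x\<in>alg I S. qeq I S (D x) (fa_add (D' x) (fa_comm B x)))"
      by blast
  }
  {
    fix n
    have eq: "(\<lambda>x. fa_comm (fa_pow (fa_gen (X s)) n) x) = (\<lambda>x. fa_comm (lk (Xg s ^ n)) x)"
      by (simp add: fa_gen_lookup fa_pow_lookup)
    have d: "is_der I S (\<lambda>x. fa_comm (lk (Xg s ^ n)) x)"
      using inner_der[OF _ assms(1,2)] Xs by simp
    have "is_der_s I S s (\<lambda>x. fa_comm (lk (Xg s ^ n)) x)"
      unfolding der_s_pm[OF d assms(3)] semispecial_pm[OF d] E_comm
      using Xs by (auto simp: power_commutes Jset.zero intro!: bexI[of _ "Xg s ^ n"])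
    then show "is_der_s I S s (\<lambda>x. fa_comm (fa_pow (fa_gen (X s)) n) x)" by (simp only: eq)
  }
  {
    fix D assume ds: "is_der_s I S s D"
    then have d: "is_der I S D" by (simp add: is_der_s_def is_semispecial_def)
    have kill: "E D (Xg s) \<in> ?J" using ds der_s_pm[OF d assms(3)] by blast
    show "is_inner I S D \<longleftrightarrow>
      (\<exists>N (c :: nat \<Rightarrow> rat). \<forall>x\<in>alg I S.
         qeq I S (D x) (\<lambda>w. \<Sum>n<N. c n * fa_comm (fa_pow (fa_gen (X s)) n) x w))"
      unfolding inner_pm[OF d] ball_alg sum_comm_lk
    proof
      assume "\<exists>B\<in>?A. \<forall>p\<in>?A. E D p - (B * p - p * B) \<in> ?J"
      then obtain B where B: "B \<in> ?A" "\<forall>p\<in>?A. E D p - (B * p - p * B) \<in> ?J" by blast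
      have "B * Xg s - Xg s * B \<in> ?J"
        using J_diff[OF kill B(2)[rule_format, OF Xs]] by simp
      then obtain N c where Nc: "B - (\<Sum>n<N. sc (c n) * Xg s ^ n) \<in> ?J"
        using KEY[OF assms B(1)] by blast
      let ?P = "\<Sum>n<N. sc (c n) * Xg s ^ n"
      show "\<exists>N c. \<forall>p\<in>?A. qeq I S (D (lk p)) (lk (\<Sum>n<N. sc (c n) * (Xg s ^ n * p - p * Xg s ^ n)))"
      proof (intro exI ballI)
        fix p assume p: "p \<in> ?A"
        have "E D p - (B * p - p * B) + ((B - ?P) * p - p * (B - ?P)) \<in> ?J"
          using J_add[OF B(2)[rule_format,OF p] J_diff[OF J_rmult[OF Nc p] J_lmult[OF Nc p]]] .
        then have "E D p - (?P * p - p * ?P) \<in> ?J" by (simp add: algebra_simps)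
        then show "qeq I S (D (lk p)) (lk (\<Sum>n<N. sc (c n) * (Xg s ^ n * p - p * Xg s ^ n)))"
          using der_E[OF d p] by (simp only: qeq_lk sum_comm_pm)
      qed
    next
      assume "\<exists>N c. \<forall>p\<in>?A. qeq I S (D (lk p)) (lk (\<Sum>n<N. sc (c n) * (Xg s ^ n * p - p * Xg s ^ n)))"
      then obtain N c where Nc: "\<forall>p\<in>?A. qeq I S (D (lk p)) (lk (\<Sum>n<N. sc (c n) * (Xg s ^ n * p - p * Xg s ^ n)))"
        by blast
      let ?P = "\<Sum>n<N. sc (c n) * Xg s ^ n"
      have "?P \<in> ?A" using Xs by auto
      moreover have "\<forall>p\<in>?A. E D p - (?P * p - p * ?P) \<in> ?J"
        using Nc der_E[OF d] by (simp add: qeq_lk sum_comm_pm)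
      ultimately show "\<exists>B\<in>?A. \<forall>p\<in>?A. E D p - (B * p - p * B) \<in> ?J" by blast
    qed
  }
qed

end
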